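(* Let $K\to K'$ be an algebraically pure morphism of fields and $x=(x_1,\ldots,x_n)$. Let $J_1,\ldots,J_p$ be subsets of $\{1,\ldots,n\}$, $x_{J_i}=(x_k)_{k\in J_i}$, and $A_i=K[x_{J_i}]_{(x_{J_i})}$, $A'_i=K'[x_{J_i}]_{(x_{J_i})}$ for $i\in\{1,\ldots,p\}$. Set $\mathcal{N}=A_1\times\cdots\times A_p$ and $\mathcal{N}'=A'_1\times\cdots\times A'_p$. Let $f$ be a finite system of polynomials in $K[x]_{(x)}[Y]$, $Y=(Y_1,\ldots,Y_p)$, and let $\hat y\in\mathcal{N}'$ satisfy $f(\hat y)=0$ (in $K'[x]_{(x)}$). Then there exists $y\in\mathcal{N}$ such that $f(y)=0$ and $\operatorname{ord} y_i=\operatorname{ord}\hat y_i$ for all $i\in\{1,\ldots,p\}$.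
   Context: A ring morphism $A\to B$ is called algebraically pure if every finite system of polynomial equations over $A$ which has a solution in $B$ also has a solution in $A$. Here $K[x_{J}]_{(x_J)}$ denotes the localization of the polynomial ring $K[x_J]$ at the maximal ideal generated by the variables $x_J$. For an element $g$ of such a local ring (or of a power series ring), $\operatorname{ord} g$ is its order with respect to the maximal ideal $(x)$, i.e. the largest $k$ with $g\in (x)^k$ (equivalently the least degree of a monomial with nonzero coefficient in its power series expansion), with $\operatorname{ord}0=\infty$. *)

theory Defs
  imports "HOL-Library.Poly_Mapping" "HOL-Computational_Algebra.Fraction_Field"
          "HOL-Library.Extended_Nat"
begin

type_synonym 'a mpoly = "(nat \<Rightarrow>\<^sub>0 nat) \<Rightarrow>\<^sub>0 'a"

definition mpeval :: "'r::comm_semiring_1 mpoly \<Rightarrow> (nat \<Rightarrow> 'r) \<Rightarrow> 'r" where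
  "mpeval P a = (\<Sum>m\<in>Poly_Mapping.keys P. Poly_Mapping.lookup P m * (\<Prod>i\<in>Poly_Mapping.keys m. a i ^ Poly_Mapping.lookup (m::nat \<Rightarrow>\<^sub>0 nat) i))"

definition mvars :: "'r::zero mpoly \<Rightarrow> nat set" where
  "mvars P = \<Union> (Poly_Mapping.keys ` Poly_Mapping.keys P)"

definition mtdeg :: "(nat \<Rightarrow>\<^sub>0 nat) \<Rightarrow> nat" where
  "mtdeg m = sum (Poly_Mapping.lookup m) (Poly_Mapping.keys m)"

definition alg_pure :: "('a::comm_ring_1 \<Rightarrow> 'b::comm_ring_1) \<Rightarrow> bool" where
  "alg_pure \<phi> \<longleftrightarrow>
     (\<forall>F :: 'a mpoly set. finite F \<longrightarrow>
        (\<exists>b :: nat \<Rightarrow> 'b. \<forall>P\<in>F. mpeval (Poly_Mapping.map \<phi> P) b = 0) \<longrightarrow>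
        (\<exists>a :: nat \<Rightarrow> 'a. \<forall>P\<in>F. mpeval P a = 0))"

text \<open>K[x_J]_(x_J), as a subring of the fraction field of K[x].\<close>
definition loc_ring :: "nat set \<Rightarrow> 'a::field mpoly fract set" where
  "loc_ring J = {Fraction_Field.Fract a d | a d. mvars a \<subseteq> J \<and> mvars d \<subseteq> J \<and> Poly_Mapping.lookup d 0 \<noteq> 0}"

definition loc_ideal_pow :: "nat set \<Rightarrow> nat \<Rightarrow> 'a::field mpoly fract set" where
  "loc_ideal_pow J k = {Fraction_Field.Fract a d | a d. mvars a \<subseteq> J \<and> mvars d \<subseteq> J \<and> Poly_Mapping.lookup d 0 \<noteq> 0
                          \<and> (\<forall>m\<in>Poly_Mapping.keys a. k \<le> mtdeg m)}"

text \<open>Order w.r.t. the maximal ideal: the largest k with g in (x_J)^k (infinity for g = 0).\<close>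
definition loc_ord :: "nat set \<Rightarrow> 'a::field mpoly fract \<Rightarrow> enat" where
  "loc_ord J g = Sup {enat k | k. g \<in> loc_ideal_pow J k}"

definition fract_map :: "('a::field \<Rightarrow> 'b::field) \<Rightarrow> 'a mpoly fract \<Rightarrow> 'b mpoly fract" where
  "fract_map \<phi> q = (let (a, d) = (SOME (a, d). d \<noteq> 0 \<and> q = Fraction_Field.Fract a d)
                     in Fraction_Field.Fract (Poly_Mapping.map \<phi> a) (Poly_Mapping.map \<phi> d))"

end

theory Submission
  imports Defs
begin


definition rhom :: "('r::comm_ring_1 \<Rightarrow> 's::comm_ring_1) \<Rightarrow> bool" where
  "rhom h \<longleftrightarrow> (\<forall>a b. h (a + b) = h a + h b) \<and> (\<forall>a b. h (a * b) = h a * h b) \<and> h 1 = 1"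

lemma rhom_add: "rhom h \<Longrightarrow> h (a + b) = h a + h b" by (simp add: rhom_def)
lemma rhom_mult: "rhom h \<Longrightarrow> h (a * b) = h a * h b" by (simp add: rhom_def)
lemma rhom_one: "rhom h \<Longrightarrow> h 1 = 1" by (simp add: rhom_def)
lemma rhom_zero: "rhom h \<Longrightarrow> h 0 = 0"
proof -
  assume "rhom h" then have "h (0 + 0) = h 0 + h 0" by (rule rhom_add)
  then show ?thesis by simp
qed
lemma rhom_uminus: "rhom h \<Longrightarrow> h (- a) = - h a"
proof -
  assume h: "rhom h" then have "h (a + - a) = h a + h (- a)" by (rule rhom_add)
  then have "h a + h (- a) = 0" using rhom_zero[OF h] by simp
  then show ?thesis by (simp add: eq_neg_iff_add_eq_0 add.commute)
qed
lemma rhom_diff: "rhom h \<Longrightarrow> h (a - b) = h a - h b"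
  by (metis diff_conv_add_uminus rhom_add rhom_uminus)
lemma rhom_sum: "rhom h \<Longrightarrow> h (sum f S) = (\<Sum>x\<in>S. h (f x))"
  by (induction S rule: infinite_finite_induct) (auto simp: rhom_zero rhom_add)
lemma rhom_prod: "rhom h \<Longrightarrow> h (prod f S) = (\<Prod>x\<in>S. h (f x))"
  by (induction S rule: infinite_finite_induct) (auto simp: rhom_one rhom_mult)
lemma rhom_power: "rhom h \<Longrightarrow> h (a ^ k) = h a ^ k"
  by (induction k) (auto simp: rhom_one rhom_mult)
lemma rhom_comp: "rhom f \<Longrightarrow> rhom g \<Longrightarrow> rhom (g \<circ> f)"
  by (simp add: rhom_def)

lemma lookup_map_hom: "f 0 = 0 \<Longrightarrow> Poly_Mapping.lookup (Poly_Mapping.map f p) k = f (Poly_Mapping.lookup p k)"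
  by transfer (auto simp: when_def)

lemma lookup_sum_single:
  "finite S \<Longrightarrow> Poly_Mapping.lookup (\<Sum>s\<in>S. Poly_Mapping.single s (g s)) t = (if t \<in> S then g t else 0)"
  by (simp add: lookup_sum lookup_single when_def)

lemma keys_sum_single:
  "finite S \<Longrightarrow> Poly_Mapping.keys (\<Sum>s\<in>S. Poly_Mapping.single s (g s)) \<subseteq> S"
  by (auto simp: in_keys_iff lookup_sum_single split: if_splits)

lemma poly_sum_single: "p = (\<Sum>s\<in>Poly_Mapping.keys p. Poly_Mapping.single s (Poly_Mapping.lookup p s))"
  by (rule poly_mapping_eqI) (simp add: lookup_sum_single in_keys_iff)

lemma poly_mult_expand:
  fixes p q :: "'k::comm_monoid_add \<Rightarrow>\<^sub>0 'r::comm_semiring_1"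
  shows "p * q = (\<Sum>s\<in>Poly_Mapping.keys p. \<Sum>t\<in>Poly_Mapping.keys q.
     Poly_Mapping.single (s + t) (Poly_Mapping.lookup p s * Poly_Mapping.lookup q t))"
proof -
  have "p * q = (\<Sum>s\<in>Poly_Mapping.keys p. Poly_Mapping.single s (Poly_Mapping.lookup p s)) *
     (\<Sum>t\<in>Poly_Mapping.keys q. Poly_Mapping.single t (Poly_Mapping.lookup q t))"
    by (rule arg_cong2[of _ _ _ _ "(*)", OF poly_sum_single[of p] poly_sum_single[of q]])
  also have "\<dots> = (\<Sum>s\<in>Poly_Mapping.keys p. \<Sum>t\<in>Poly_Mapping.keys q.
     Poly_Mapping.single s (Poly_Mapping.lookup p s) * Poly_Mapping.single t (Poly_Mapping.lookup q t))"
    by (simp add: sum_product)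
  finally show ?thesis by (simp add: mult_single)
qed



lemma map_zero_hom: "rhom h \<Longrightarrow> Poly_Mapping.map h 0 = 0"
  by (rule poly_mapping_eqI) (simp add: lookup_map_hom rhom_zero)

lemma map_add_hom: "rhom h \<Longrightarrow> Poly_Mapping.map h (p + q) = Poly_Mapping.map h p + Poly_Mapping.map h q"
  by (rule poly_mapping_eqI) (simp add: lookup_map_hom rhom_zero lookup_add rhom_add)

lemma map_sum_hom: "rhom h \<Longrightarrow> Poly_Mapping.map h (sum f S) = (\<Sum>x\<in>S. Poly_Mapping.map h (f x))"
  by (induction S rule: infinite_finite_induct) (auto simp: map_add_hom map_zero_hom)

lemma map_as_sum: "rhom h \<Longrightarrow> Poly_Mapping.map h p =
   (\<Sum>s\<in>Poly_Mapping.keys p. Poly_Mapping.single s (h (Poly_Mapping.lookup p s)))"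
proof -
  assume h: "rhom h"
  have "Poly_Mapping.map h p = Poly_Mapping.map h (\<Sum>s\<in>Poly_Mapping.keys p. Poly_Mapping.single s (Poly_Mapping.lookup p s))"
    by (rule arg_cong[OF poly_sum_single[of p]])
  also have "\<dots> = (\<Sum>s\<in>Poly_Mapping.keys p. Poly_Mapping.single s (h (Poly_Mapping.lookup p s)))"
    using h by (simp add: map_sum_hom rhom_zero)
  finally show ?thesis .
qed

lemma sum_single_mult:
  fixes f g :: "'k::comm_monoid_add \<Rightarrow> 'r::comm_semiring_1"
  shows "(\<Sum>s\<in>S. Poly_Mapping.single s (f s)) * (\<Sum>t\<in>T. Poly_Mapping.single t (g t)) =
     (\<Sum>s\<in>S. \<Sum>t\<in>T. Poly_Mapping.single (s + t) (f s * g t))"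
  by (simp add: sum_product mult_single)

lemma rhom_map:
  fixes h :: "'r::comm_ring_1 \<Rightarrow> 's::comm_ring_1"
  assumes h: "rhom h"
  shows "rhom (Poly_Mapping.map h :: ('k::comm_monoid_add \<Rightarrow>\<^sub>0 'r) \<Rightarrow> ('k \<Rightarrow>\<^sub>0 's))"
  unfolding rhom_def
proof (intro conjI allI)
  fix p q :: "'k \<Rightarrow>\<^sub>0 'r"
  show "Poly_Mapping.map h (p + q) = Poly_Mapping.map h p + Poly_Mapping.map h q"
    using h by (rule map_add_hom)
  have "Poly_Mapping.map h (p * q) = (\<Sum>s\<in>Poly_Mapping.keys p. \<Sum>t\<in>Poly_Mapping.keys q.
     Poly_Mapping.single (s + t) (h (Poly_Mapping.lookup p s) * h (Poly_Mapping.lookup q t)))"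
    by (simp add: poly_mult_expand map_sum_hom[OF h] rhom_zero[OF h] rhom_mult[OF h])
  also have "\<dots> = Poly_Mapping.map h p * Poly_Mapping.map h q"
    by (simp add: map_as_sum[OF h] sum_single_mult)
  finally show "Poly_Mapping.map h (p * q) = Poly_Mapping.map h p * Poly_Mapping.map h q" .
  show "Poly_Mapping.map h 1 = 1"
    by (rule poly_mapping_eqI) (simp add: lookup_map_hom rhom_zero[OF h] lookup_one when_def rhom_one[OF h])
qed



definition mon :: "(nat \<Rightarrow>\<^sub>0 nat) \<Rightarrow> (nat \<Rightarrow> 'r::comm_semiring_1) \<Rightarrow> 'r" where
  "mon m a = (\<Prod>i\<in>Poly_Mapping.keys m. a i ^ Poly_Mapping.lookup m i)"

lemma mpeval_mon: "mpeval P a = (\<Sum>m\<in>Poly_Mapping.keys P. Poly_Mapping.lookup P m * mon m a)"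
  by (simp add: mpeval_def mon_def)

lemma mon_superset: "finite S \<Longrightarrow> Poly_Mapping.keys m \<subseteq> S \<Longrightarrow>
   mon m a = (\<Prod>i\<in>S. a i ^ Poly_Mapping.lookup m i)"
  unfolding mon_def by (rule prod.mono_neutral_left) (auto simp: in_keys_iff)

lemma mpeval_superset: "finite S \<Longrightarrow> Poly_Mapping.keys P \<subseteq> S \<Longrightarrow>
   mpeval P a = (\<Sum>m\<in>S. Poly_Mapping.lookup P m * mon m a)"
  unfolding mpeval_mon by (rule sum.mono_neutral_left) (auto simp: in_keys_iff)

lemma mon_add: "mon (s + t) a = mon s a * mon t a"
proof -
  let ?S = "Poly_Mapping.keys s \<union> Poly_Mapping.keys t"
  have "mon (s + t) a = (\<Prod>i\<in>?S. a i ^ Poly_Mapping.lookup (s + t) i)"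
    by (rule mon_superset) (auto simp: keys_add dest: subsetD[OF keys_add])
  also have "\<dots> = (\<Prod>i\<in>?S. a i ^ Poly_Mapping.lookup s i) * (\<Prod>i\<in>?S. a i ^ Poly_Mapping.lookup t i)"
    by (simp add: lookup_add power_add prod.distrib)
  also have "\<dots> = mon s a * mon t a"
    using mon_superset[of ?S s a] mon_superset[of ?S t a] by simp
  finally show ?thesis .
qed

lemma mon_zero [simp]: "mon 0 a = 1"
  by (simp add: mon_def)

lemma mpeval_add: "mpeval (P + Q) a = mpeval P a + mpeval Q a"
proof -
  let ?S = "Poly_Mapping.keys P \<union> Poly_Mapping.keys Q"
  have "mpeval (P + Q) a = (\<Sum>m\<in>?S. Poly_Mapping.lookup (P + Q) m * mon m a)"
    by (rule mpeval_superset) (auto dest: subsetD[OF keys_add])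
  also have "\<dots> = mpeval P a + mpeval Q a"
    using mpeval_superset[of ?S P a] mpeval_superset[of ?S Q a]
    by (simp add: lookup_add distrib_right sum.distrib)
  finally show ?thesis .
qed

lemma mpeval_zero [simp]: "mpeval 0 a = 0"
  by (simp add: mpeval_def)

lemma mpeval_sum: "mpeval (sum f S) a = (\<Sum>x\<in>S. mpeval (f x) a)"
  by (induction S rule: infinite_finite_induct) (auto simp: mpeval_add)

lemma mpeval_single: "mpeval (Poly_Mapping.single s c) a = c * mon s a"
  by (cases "c = 0") (simp_all add: mpeval_mon)

lemma mpeval_mult: "mpeval (P * Q) a = mpeval P a * mpeval Q a"
proof -
  have "mpeval (P * Q) a = mpeval (\<Sum>s\<in>Poly_Mapping.keys P. \<Sum>t\<in>Poly_Mapping.keys Q.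
     Poly_Mapping.single (s + t) (Poly_Mapping.lookup P s * Poly_Mapping.lookup Q t)) a"
    by (rule arg_cong[OF poly_mult_expand])
  also have "\<dots> = (\<Sum>s\<in>Poly_Mapping.keys P. \<Sum>t\<in>Poly_Mapping.keys Q.
     (Poly_Mapping.lookup P s * mon s a) * (Poly_Mapping.lookup Q t * mon t a))"
    by (simp only: mpeval_sum mpeval_single mon_add mult_ac)
  also have "\<dots> = mpeval P a * mpeval Q a"
    by (simp only: mpeval_mon sum_product)
  finally show ?thesis .
qed

lemma mpeval_one: "mpeval 1 a = 1"
  by (simp add: mpeval_mon)

lemma rhom_mpeval: "rhom (\<lambda>P. mpeval P (a :: nat \<Rightarrow> 'r::comm_ring_1))"
  by (simp add: rhom_def mpeval_add mpeval_mult mpeval_one)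

definition Var :: "nat \<Rightarrow> 'r::comm_ring_1 mpoly" where
  "Var v = Poly_Mapping.single (Poly_Mapping.single v 1) 1"

lemma mpeval_Var: "mpeval (Var v) a = a v"
  by (simp add: Var_def mpeval_single mon_def)

lemma map_Var: "rhom h \<Longrightarrow> Poly_Mapping.map h (Var v) = Var v"
  by (simp add: Var_def rhom_one rhom_zero)



lemma mtdeg_superset: "finite S \<Longrightarrow> Poly_Mapping.keys m \<subseteq> S \<Longrightarrow> mtdeg m = sum (Poly_Mapping.lookup m) S"
  unfolding mtdeg_def by (rule sum.mono_neutral_left) (auto simp: in_keys_iff)

lemma mtdeg_add: "mtdeg (s + t) = mtdeg s + mtdeg t"
proof -
  let ?S = "Poly_Mapping.keys s \<union> Poly_Mapping.keys t"
  have "mtdeg (s + t) = sum (Poly_Mapping.lookup (s + t)) ?S"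
    by (rule mtdeg_superset) (auto dest: subsetD[OF keys_add])
  also have "\<dots> = sum (Poly_Mapping.lookup s) ?S + sum (Poly_Mapping.lookup t) ?S"
    by (simp add: lookup_add sum.distrib)
  also have "\<dots> = mtdeg s + mtdeg t"
    using mtdeg_superset[of ?S s] mtdeg_superset[of ?S t] by simp
  finally show ?thesis .
qed

lemma mtdeg_eq_0: "mtdeg t = 0 \<Longrightarrow> t = 0"
proof -
  assume "mtdeg t = 0"
  then have "\<forall>k\<in>Poly_Mapping.keys t. Poly_Mapping.lookup t k = 0" by (simp add: mtdeg_def)
  then show "t = 0" by (intro poly_mapping_eqI) (auto simp: in_keys_iff)
qed

lemma lookup_le_mtdeg: "Poly_Mapping.lookup m j \<le> mtdeg m"
  unfolding mtdeg_def
  by (cases "j \<in> Poly_Mapping.keys m") (auto intro: member_le_sum simp: in_keys_iff)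

lemma keys_mult_deg:
  fixes A B :: "'r::comm_semiring_1 mpoly"
  assumes "\<forall>s\<in>Poly_Mapping.keys A. k \<le> mtdeg s" "u \<in> Poly_Mapping.keys (A * B)"
  shows "k \<le> mtdeg u"
proof -
  obtain s t where "u = s + t" "s \<in> Poly_Mapping.keys A" using keys_mult assms(2) by blast
  then show ?thesis using assms(1) mtdeg_add[of s t] by fastforce
qed

lemma lookup_mult_low:
  fixes A B :: "'r::comm_semiring_1 mpoly"
  assumes low: "\<forall>s\<in>Poly_Mapping.keys A. mtdeg \<mu> \<le> mtdeg s"
  shows "Poly_Mapping.lookup (A * B) \<mu> = Poly_Mapping.lookup A \<mu> * Poly_Mapping.lookup B 0"
proof -
  have "Poly_Mapping.lookup (A * B) \<mu> = (\<Sum>s\<in>Poly_Mapping.keys A. \<Sum>t\<in>Poly_Mapping.keys B.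
     (if s + t = \<mu> then Poly_Mapping.lookup A s * Poly_Mapping.lookup B t else 0))"
    by (subst poly_mult_expand) (simp add: lookup_sum lookup_single when_def)
  also have "\<dots> = (\<Sum>s\<in>Poly_Mapping.keys A. \<Sum>t\<in>Poly_Mapping.keys B.
     (if s = \<mu> then (if t = 0 then Poly_Mapping.lookup A s * Poly_Mapping.lookup B t else 0) else 0))"
  proof (intro sum.cong refl)
    fix s t assume s: "s \<in> Poly_Mapping.keys A" and t: "t \<in> Poly_Mapping.keys B"
    show "(if s + t = \<mu> then Poly_Mapping.lookup A s * Poly_Mapping.lookup B t else 0) =
      (if s = \<mu> then (if t = 0 then Poly_Mapping.lookup A s * Poly_Mapping.lookup B t else 0) else 0)"
    proof (cases "s + t = \<mu>")
      case True
      then have "mtdeg s + mtdeg t = mtdeg \<mu>" using mtdeg_add[of s t] by simp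
      with low s have "mtdeg t = 0" by fastforce
      then have "t = 0" by (rule mtdeg_eq_0)
      with True show ?thesis by simp
    next
      case False
      then show ?thesis by auto
    qed
  qed
  also have "\<dots> = (\<Sum>s\<in>Poly_Mapping.keys A. if s = \<mu> then Poly_Mapping.lookup A s * Poly_Mapping.lookup B 0 else 0)"
  proof (rule sum.cong[OF refl])
    fix s
    show "(\<Sum>t\<in>Poly_Mapping.keys B.
     (if s = \<mu> then (if t = 0 then Poly_Mapping.lookup A s * Poly_Mapping.lookup B t else 0) else 0)) =
      (if s = \<mu> then Poly_Mapping.lookup A s * Poly_Mapping.lookup B 0 else 0)"
      by (cases "s = \<mu>") (simp_all add: in_keys_iff)
  qed
  also have "\<dots> = Poly_Mapping.lookup A \<mu> * Poly_Mapping.lookup B 0"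
    by (simp add: in_keys_iff)
  finally show ?thesis .
qed

lemma mvars_sub: "m \<in> Poly_Mapping.keys P \<Longrightarrow> Poly_Mapping.keys m \<subseteq> mvars P"
  by (auto simp: mvars_def)

lemma mvars_mono: "Poly_Mapping.keys P \<subseteq> Poly_Mapping.keys Q \<Longrightarrow> mvars P \<subseteq> mvars Q"
  by (auto simp: mvars_def)

lemma lookup0_nz: "Poly_Mapping.lookup d 0 \<noteq> 0 \<Longrightarrow> d \<noteq> 0"
  by auto

lemma loc_ord_eq:
  fixes A D :: "'c::field mpoly"
  assumes A: "mvars A \<subseteq> J" and D: "mvars D \<subseteq> J" "Poly_Mapping.lookup D 0 \<noteq> 0"
    and mu: "\<mu> \<in> Poly_Mapping.keys A" and low: "\<forall>s\<in>Poly_Mapping.keys A. mtdeg \<mu> \<le> mtdeg s"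
  shows "loc_ord J (Fraction_Field.Fract A D) = enat (mtdeg \<mu>)"
proof -
  let ?S = "{enat k |k. Fraction_Field.Fract A D \<in> loc_ideal_pow J k}"
  have in1: "enat (mtdeg \<mu>) \<in> ?S"
    unfolding loc_ideal_pow_def using A D low by blast
  have ub: "x \<le> enat (mtdeg \<mu>)" if xS: "x \<in> ?S" for x
  proof -
    obtain k a d where x: "x = enat k" and eq: "Fraction_Field.Fract A D = Fraction_Field.Fract a d"
      and d0: "Poly_Mapping.lookup d 0 \<noteq> 0" and ka: "\<forall>m\<in>Poly_Mapping.keys a. k \<le> mtdeg m"
      using xS unfolding loc_ideal_pow_def by blast
    have "D \<noteq> 0" "d \<noteq> 0" using D d0 by auto
    with eq have "A * d = a * D" by (simp add: eq_fract)
    moreover have "Poly_Mapping.lookup (A * d) \<mu> \<noteq> 0"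
      using lookup_mult_low[OF low, of d] mu d0 by (simp add: in_keys_iff)
    ultimately have "\<mu> \<in> Poly_Mapping.keys (a * D)" by (simp add: in_keys_iff)
    then have "k \<le> mtdeg \<mu>" using keys_mult_deg[OF ka] by blast
    then show ?thesis using x by simp
  qed
  have "Sup ?S = enat (mtdeg \<mu>)"
    by (rule antisym[OF Sup_least[OF ub] Sup_upper[OF in1]])
  then show ?thesis unfolding loc_ord_def .
qed

lemma loc_ord_zero: "loc_ord J (0 :: 'c::field mpoly fract) = \<infinity>"
proof -
  have H: "(0 :: 'c mpoly fract) \<in> loc_ideal_pow J k" for k
    unfolding loc_ideal_pow_def
    by (rule CollectI, rule exI[of _ 0], rule exI[of _ 1]) (simp add: mvars_def fract_collapse)
  have le: "enat k \<le> loc_ord J (0 :: 'c mpoly fract)" for k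
    unfolding loc_ord_def by (rule Sup_upper) (use H in blast)
  show ?thesis
  proof (cases "loc_ord J (0 :: 'c mpoly fract)")
    case (enat m)
    then have "enat (Suc m) \<le> enat m" using le[of "Suc m"] by simp
    then show ?thesis by simp
  next
    case infinity
    then show ?thesis by simp
  qed
qed



lemma rhom_field_nz:
  fixes \<phi> :: "'a::field \<Rightarrow> 'b::field"
  assumes h: "rhom \<phi>" and x: "x \<noteq> 0" shows "\<phi> x \<noteq> 0"
proof
  assume "\<phi> x = 0"
  then have "\<phi> (x * inverse x) = 0" using rhom_mult[OF h] by simp
  then show False using x rhom_one[OF h] by simp
qed

lemma map_nz:
  fixes \<phi> :: "'a::field \<Rightarrow> 'b::field"
  assumes h: "rhom \<phi>" and q: "q \<noteq> 0" shows "Poly_Mapping.map \<phi> q \<noteq> 0"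
proof -
  have "Poly_Mapping.keys q \<noteq> {}" using q by simp
  then obtain k where "k \<in> Poly_Mapping.keys q" by blast
  then have "\<phi> (Poly_Mapping.lookup q k) \<noteq> 0" using rhom_field_nz[OF h] by (simp add: in_keys_iff)
  then show ?thesis using \<open>k \<in> _\<close> by (auto simp: map_eq_zero_iff)
qed

lemma fract_map_Fract:
  fixes \<phi> :: "'a::field \<Rightarrow> 'b::field"
  assumes h: "rhom \<phi>" and d: "d \<noteq> 0"
  shows "fract_map \<phi> (Fraction_Field.Fract a d) =
     Fraction_Field.Fract (Poly_Mapping.map \<phi> a) (Poly_Mapping.map \<phi> d)"
proof -
  let ?P = "\<lambda>(a', d'). d' \<noteq> 0 \<and> Fraction_Field.Fract a d = Fraction_Field.Fract a' d'"
  obtain a' d' where ad: "(SOME x. ?P x) = (a', d')" by (cases "SOME x. ?P x") auto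
  have "?P (a, d)" using d by simp
  then have "?P (SOME x. ?P x)" by (rule someI)
  then have d': "d' \<noteq> 0" and eq: "Fraction_Field.Fract a d = Fraction_Field.Fract a' d'" using ad by auto
  have "a * d' = a' * d" using eq d d' by (simp add: eq_fract)
  have e2: "Poly_Mapping.map \<phi> a * Poly_Mapping.map \<phi> d' = Poly_Mapping.map \<phi> a' * Poly_Mapping.map \<phi> d"
  proof -
    have "Poly_Mapping.map \<phi> (a * d') = Poly_Mapping.map \<phi> (a' * d)" using \<open>a * d' = a' * d\<close> by simp
    then show ?thesis by (simp only: rhom_mult[OF rhom_map[OF h]])
  qed
  have "fract_map \<phi> (Fraction_Field.Fract a d) = Fraction_Field.Fract (Poly_Mapping.map \<phi> a') (Poly_Mapping.map \<phi> d')"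
    unfolding fract_map_def using ad by simp
  also have "\<dots> = Fraction_Field.Fract (Poly_Mapping.map \<phi> a) (Poly_Mapping.map \<phi> d)"
    using e2 map_nz[OF h d] map_nz[OF h d'] by (simp add: eq_fract)
  finally show ?thesis .
qed

lemma fract_map_zero:
  fixes \<phi> :: "'a::field \<Rightarrow> 'b::field"
  assumes h: "rhom \<phi>" shows "fract_map \<phi> 0 = 0"
proof -
  have "fract_map \<phi> (Fraction_Field.Fract 0 1) = Fraction_Field.Fract (Poly_Mapping.map \<phi> 0) (Poly_Mapping.map \<phi> 1)"
    using fract_map_Fract[OF h, of 1 0] by simp
  moreover have "Fraction_Field.Fract (Poly_Mapping.map \<phi> 0) (Poly_Mapping.map \<phi> 1) = 0"
    by (simp add: map_zero_hom[OF h] fract_collapse)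
  ultimately show ?thesis by (simp add: fract_collapse)
qed

lemma rhom_emb: "rhom (\<lambda>x::'r::idom. Fraction_Field.Fract x 1)"
  by (simp add: rhom_def One_fract_def)

lemma Fract_div: "d \<noteq> 0 \<Longrightarrow> Fraction_Field.Fract (a::'r::idom) d = Fraction_Field.Fract a 1 / Fraction_Field.Fract d 1"
  by (simp add: divide_inverse)

lemma emb_eq_0: "Fraction_Field.Fract (x::'r::idom) 1 = 0 \<longleftrightarrow> x = 0"
  by (simp add: Zero_fract_def eq_fract)

lemma clear_denoms:
  fixes \<alpha> \<delta> :: "'m \<Rightarrow> 'f::field" and A D :: "nat \<Rightarrow> 'f" and e :: "'m \<Rightarrow> nat \<Rightarrow> nat"
  assumes S: "finite S" and \<delta>: "\<And>m. m \<in> S \<Longrightarrow> \<delta> m \<noteq> 0" and Dnz: "\<And>j. j \<in> V \<Longrightarrow> D j \<noteq> 0"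
    and eN: "\<And>m j. m \<in> S \<Longrightarrow> e m j \<le> N"
  shows "(\<Sum>m\<in>S. \<alpha> m / \<delta> m * (\<Prod>j\<in>V. (A j / D j) ^ e m j)) * ((\<Prod>m\<in>S. \<delta> m) * (\<Prod>j\<in>V. D j ^ N))
    = (\<Sum>m\<in>S. \<alpha> m * (\<Prod>m'\<in>S-{m}. \<delta> m') * (\<Prod>j\<in>V. A j ^ e m j * D j ^ (N - e m j)))"
proof -
  have tm: "\<alpha> m / \<delta> m * (\<Prod>j\<in>V. (A j / D j) ^ e m j) * ((\<Prod>m\<in>S. \<delta> m) * (\<Prod>j\<in>V. D j ^ N))
     = \<alpha> m * (\<Prod>m'\<in>S-{m}. \<delta> m') * (\<Prod>j\<in>V. A j ^ e m j * D j ^ (N - e m j))" if m: "m \<in> S" for m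
  proof -
    let ?X = "\<Prod>j\<in>V. (A j / D j) ^ e m j" and ?Y = "\<Prod>j\<in>V. D j ^ N"
      and ?R = "\<Prod>m'\<in>S-{m}. \<delta> m'" and ?Z = "\<Prod>j\<in>V. A j ^ e m j * D j ^ (N - e m j)"
    have p1: "(\<Prod>m\<in>S. \<delta> m) = \<delta> m * ?R" using prod.remove[OF S m] .
    have p2: "?X * ?Y = ?Z"
      unfolding prod.distrib[symmetric]
    proof (rule prod.cong[OF refl])
      fix j assume j: "j \<in> V"
      have "D j ^ N = D j ^ e m j * D j ^ (N - e m j)"
        using eN[OF m, of j] by (simp add: power_add[symmetric])
      then show "(A j / D j) ^ e m j * D j ^ N = A j ^ e m j * D j ^ (N - e m j)"
        using Dnz[OF j] by (simp add: power_divide field_simps)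
    qed
    have "\<alpha> m / \<delta> m * ?X * ((\<Prod>m\<in>S. \<delta> m) * ?Y) = (\<alpha> m / \<delta> m * \<delta> m) * ?R * (?X * ?Y)"
      unfolding p1 by (simp only: mult_ac)
    also have "\<dots> = \<alpha> m * ?R * ?Z" using \<delta>[OF m] p2 by simp
    finally show ?thesis .
  qed
  show ?thesis unfolding sum_distrib_right by (rule sum.cong[OF refl]) (rule tm)
qed

definition Eexpr :: "(nat \<Rightarrow>\<^sub>0 nat) set \<Rightarrow> ((nat \<Rightarrow>\<^sub>0 nat) \<Rightarrow> 'c::comm_ring_1) \<Rightarrow> ((nat \<Rightarrow>\<^sub>0 nat) \<Rightarrow> 'c)
   \<Rightarrow> nat set \<Rightarrow> (nat \<Rightarrow> 'c) \<Rightarrow> (nat \<Rightarrow> 'c) \<Rightarrow> nat \<Rightarrow> 'c" where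
  "Eexpr S \<alpha> \<delta> V A D N = (\<Sum>m\<in>S. \<alpha> m * (\<Prod>m'\<in>S-{m}. \<delta> m') *
      (\<Prod>j\<in>V. A j ^ Poly_Mapping.lookup m j * D j ^ (N - Poly_Mapping.lookup m j)))"

lemma rhom_Eexpr: "rhom h \<Longrightarrow> h (Eexpr S \<alpha> \<delta> V A D N) =
   Eexpr S (\<lambda>m. h (\<alpha> m)) (\<lambda>m. h (\<delta> m)) V (\<lambda>j. h (A j)) (\<lambda>j. h (D j)) N"
  by (simp add: Eexpr_def rhom_sum rhom_mult rhom_prod rhom_power)

lemma Eexpr_cong:
  assumes "\<And>m. m \<in> S \<Longrightarrow> \<alpha> m = \<alpha>' m" "\<And>m. m \<in> S \<Longrightarrow> \<delta> m = \<delta>' m"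
    "\<And>j. j \<in> V \<Longrightarrow> A j = A' j" "\<And>j. j \<in> V \<Longrightarrow> D j = D' j"
  shows "Eexpr S \<alpha> \<delta> V A D N = Eexpr S \<alpha>' \<delta>' V A' D' N"
  unfolding Eexpr_def using assms by (auto intro!: sum.cong prod.cong)

lemma eval_clear:
  fixes P :: "'k::field mpoly fract mpoly" and \<alpha> \<delta> :: "(nat \<Rightarrow>\<^sub>0 nat) \<Rightarrow> 'k mpoly"
    and A D :: "nat \<Rightarrow> 'k mpoly" and y :: "nat \<Rightarrow> 'k mpoly fract"
  assumes S: "finite S" "Poly_Mapping.keys P \<subseteq> S" and V: "finite V"
    and coef: "\<And>m. m \<in> S \<Longrightarrow> Poly_Mapping.lookup P m = Fraction_Field.Fract (\<alpha> m) (\<delta> m)"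
    and \<delta>: "\<And>m. m \<in> S \<Longrightarrow> \<delta> m \<noteq> 0"
    and vars: "\<And>m. m \<in> S \<Longrightarrow> Poly_Mapping.keys m \<subseteq> V"
    and y: "\<And>j. j \<in> V \<Longrightarrow> y j = Fraction_Field.Fract (A j) (D j)" and D: "\<And>j. j \<in> V \<Longrightarrow> D j \<noteq> 0"
    and N: "\<And>m j. m \<in> S \<Longrightarrow> Poly_Mapping.lookup m j \<le> N"
  shows "mpeval P y * Fraction_Field.Fract ((\<Prod>m\<in>S. \<delta> m) * (\<Prod>j\<in>V. D j ^ N)) 1
     = Fraction_Field.Fract (Eexpr S \<alpha> \<delta> V A D N) 1"
proof -
  define emb :: "'k mpoly \<Rightarrow> 'k mpoly fract" where "emb x = Fraction_Field.Fract x 1" for x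
  have he: "rhom emb" unfolding emb_def by (rule rhom_emb)
  have fd: "Fraction_Field.Fract u v = emb u / emb v" if "v \<noteq> 0" for u v
    unfolding emb_def by (rule Fract_div[OF that])
  have enz: "emb v \<noteq> 0" if "v \<noteq> 0" for v
    unfolding emb_def emb_eq_0 by (rule that)
  have "mpeval P y = (\<Sum>m\<in>S. Poly_Mapping.lookup P m * mon m y)"
    by (rule mpeval_superset[OF S])
  also have "\<dots> = (\<Sum>m\<in>S. emb (\<alpha> m) / emb (\<delta> m) * (\<Prod>j\<in>V. (emb (A j) / emb (D j)) ^ Poly_Mapping.lookup m j))"
  proof (rule sum.cong[OF refl])
    fix m assume m: "m \<in> S"
    have "mon m y = (\<Prod>j\<in>V. y j ^ Poly_Mapping.lookup m j)" by (rule mon_superset[OF V vars[OF m]])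
    also have "\<dots> = (\<Prod>j\<in>V. (emb (A j) / emb (D j)) ^ Poly_Mapping.lookup m j)"
      by (rule prod.cong[OF refl]) (simp add: y fd D)
    finally show "Poly_Mapping.lookup P m * mon m y = emb (\<alpha> m) / emb (\<delta> m) * (\<Prod>j\<in>V. (emb (A j) / emb (D j)) ^ Poly_Mapping.lookup m j)"
      using coef[OF m] fd[OF \<delta>[OF m]] by simp
  qed
  finally have ev: "mpeval P y = (\<Sum>m\<in>S. emb (\<alpha> m) / emb (\<delta> m) * (\<Prod>j\<in>V. (emb (A j) / emb (D j)) ^ Poly_Mapping.lookup m j))" .
  have e1: "emb ((\<Prod>m\<in>S. \<delta> m) * (\<Prod>j\<in>V. D j ^ N)) = (\<Prod>m\<in>S. emb (\<delta> m)) * (\<Prod>j\<in>V. emb (D j) ^ N)"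
    by (simp only: rhom_mult[OF he] rhom_prod[OF he] rhom_power[OF he])
  have "mpeval P y * emb ((\<Prod>m\<in>S. \<delta> m) * (\<Prod>j\<in>V. D j ^ N)) =
     (\<Sum>m\<in>S. emb (\<alpha> m) / emb (\<delta> m) * (\<Prod>j\<in>V. (emb (A j) / emb (D j)) ^ Poly_Mapping.lookup m j)) *
      ((\<Prod>m\<in>S. emb (\<delta> m)) * (\<Prod>j\<in>V. emb (D j) ^ N))"
    by (simp only: ev e1)
  also have "\<dots> = Eexpr S (\<lambda>m. emb (\<alpha> m)) (\<lambda>m. emb (\<delta> m)) V (\<lambda>j. emb (A j)) (\<lambda>j. emb (D j)) N"
    unfolding Eexpr_def
    by (rule clear_denoms[OF S(1)]) (simp_all add: enz \<delta> D N)
  also have "\<dots> = emb (Eexpr S \<alpha> \<delta> V A D N)"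
    by (rule rhom_Eexpr[OF he, symmetric])
  finally show ?thesis unfolding emb_def .
qed

definition tmpl :: "(nat \<Rightarrow>\<^sub>0 nat) set \<Rightarrow> ((nat \<Rightarrow>\<^sub>0 nat) \<Rightarrow> 'c::comm_monoid_add) \<Rightarrow> (nat \<Rightarrow>\<^sub>0 nat) \<Rightarrow>\<^sub>0 'c" where
  "tmpl S g = (\<Sum>s\<in>S. Poly_Mapping.single s (g s))"

lemma lookup_tmpl: "finite S \<Longrightarrow> Poly_Mapping.lookup (tmpl S g) t = (if t \<in> S then g t else 0)"
  unfolding tmpl_def by (rule lookup_sum_single)

lemma keys_tmpl: "finite S \<Longrightarrow> Poly_Mapping.keys (tmpl S g) \<subseteq> S"
  unfolding tmpl_def by (rule keys_sum_single)

lemma tmpl_self: "tmpl (Poly_Mapping.keys p) (Poly_Mapping.lookup p) = p"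
  unfolding tmpl_def by (rule poly_sum_single[symmetric])

lemma tmpl_cong: "(\<And>s. s \<in> S \<Longrightarrow> g s = g' s) \<Longrightarrow> tmpl S g = tmpl S g'"
  unfolding tmpl_def by (auto intro!: sum.cong)

lemma map_tmpl: "rhom h \<Longrightarrow> Poly_Mapping.map h (tmpl S g) = tmpl S (\<lambda>s. h (g s))"
  unfolding tmpl_def by (simp add: map_sum_hom rhom_zero)

lemma map_map_hom: "g 0 = 0 \<Longrightarrow> h 0 = 0 \<Longrightarrow>
   Poly_Mapping.map h (Poly_Mapping.map g p) = Poly_Mapping.map (\<lambda>x. h (g x)) p"
  by (rule poly_mapping_eqI) (simp add: lookup_map_hom)

lemma map_ident: "Poly_Mapping.map (\<lambda>x. x) p = p"
  by (rule poly_mapping_eqI) (simp add: lookup_map_hom)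



theorem proposition1p2:
  fixes \<phi> :: "'a::field \<Rightarrow> 'b::field"
    and n p :: nat
    and J :: "nat \<Rightarrow> nat set"
    and F :: "'a mpoly fract mpoly set"
    and yhat :: "nat \<Rightarrow> 'b mpoly fract"
  assumes hom_add: "\<And>a b. \<phi> (a + b) = \<phi> a + \<phi> b"
    and hom_mult: "\<And>a b. \<phi> (a * b) = \<phi> a * \<phi> b"
    and hom_one: "\<phi> 1 = 1"
    and pure: "alg_pure \<phi>"
    and J_sub: "\<And>i. i \<in> {1..p} \<Longrightarrow> J i \<subseteq> {1..n}"
    and F_fin: "finite F"
    and F_coeffs: "\<And>P m. P \<in> F \<Longrightarrow> m \<in> Poly_Mapping.keys P \<Longrightarrow> Poly_Mapping.lookup P m \<in> loc_ring {1..n}"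
    and F_vars: "\<And>P. P \<in> F \<Longrightarrow> mvars P \<subseteq> {1..p}"
    and yhat_in: "\<And>i. i \<in> {1..p} \<Longrightarrow> yhat i \<in> loc_ring (J i)"
    and yhat_sol: "\<And>P. P \<in> F \<Longrightarrow> mpeval (Poly_Mapping.map (fract_map \<phi>) P) yhat = 0"
  shows "\<exists>y :: nat \<Rightarrow> 'a mpoly fract.
           (\<forall>i\<in>{1..p}. y i \<in> loc_ring (J i) \<and> loc_ord (J i) (y i) = loc_ord (J i) (yhat i))
         \<and> (\<forall>P\<in>F. mpeval P y = 0)"
proof -
  have h: "rhom \<phi>" using hom_add hom_mult hom_one by (simp add: rhom_def)
  define V where "V = {1..p}"
  have finV: "finite V" by (simp add: V_def)
  have ex1: "\<forall>j\<in>V. \<exists>AD. yhat j = Fraction_Field.Fract (fst AD) (snd AD) \<and> mvars (fst AD) \<subseteq> J j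
     \<and> mvars (snd AD) \<subseteq> J j \<and> Poly_Mapping.lookup (snd AD) 0 \<noteq> 0"
  proof
    fix j assume "j \<in> V"
    then have "yhat j \<in> loc_ring (J j)" using yhat_in unfolding V_def by blast
    then obtain A D where "yhat j = Fraction_Field.Fract A D" "mvars A \<subseteq> J j" "mvars D \<subseteq> J j"
        "Poly_Mapping.lookup D 0 \<noteq> 0"
      unfolding loc_ring_def by blast
    then show "\<exists>AD. yhat j = Fraction_Field.Fract (fst AD) (snd AD) \<and> mvars (fst AD) \<subseteq> J j
     \<and> mvars (snd AD) \<subseteq> J j \<and> Poly_Mapping.lookup (snd AD) 0 \<noteq> 0"
      by (intro exI[of _ "(A, D)"]) simp
  qed
  define YAD where "YAD = (SOME f. \<forall>j\<in>V. yhat j = Fraction_Field.Fract (fst (f j)) (snd (f j)) \<and> mvars (fst (f j)) \<subseteq> J j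
     \<and> mvars (snd (f j)) \<subseteq> J j \<and> Poly_Mapping.lookup (snd (f j)) 0 \<noteq> 0)"
  have YAD: "\<forall>j\<in>V. yhat j = Fraction_Field.Fract (fst (YAD j)) (snd (YAD j)) \<and> mvars (fst (YAD j)) \<subseteq> J j
     \<and> mvars (snd (YAD j)) \<subseteq> J j \<and> Poly_Mapping.lookup (snd (YAD j)) 0 \<noteq> 0"
    unfolding YAD_def by (rule someI_ex[OF bchoice[OF ex1]])
  define YA where "YA j = fst (YAD j)" for j
  define YD where "YD j = snd (YAD j)" for j
  have yhat_eq: "yhat j = Fraction_Field.Fract (YA j) (YD j)"
    and YA_vars: "mvars (YA j) \<subseteq> J j"
    and YD_vars: "mvars (YD j) \<subseteq> J j"
    and YD0: "Poly_Mapping.lookup (YD j) 0 \<noteq> 0" if "j \<in> V" for j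
    using bspec[OF YAD that] unfolding YA_def YD_def by simp_all
  have YDnz: "YD j \<noteq> 0" if "j \<in> V" for j using YD0[OF that] by auto
  have YD0k: "0 \<in> Poly_Mapping.keys (YD j)" if "j \<in> V" for j using YD0[OF that] by (simp add: in_keys_iff)

  have ex2: "\<forall>Pm\<in>Sigma F Poly_Mapping.keys. \<exists>ad. Poly_Mapping.lookup (fst Pm) (snd Pm) = Fraction_Field.Fract (fst ad) (snd ad)
      \<and> Poly_Mapping.lookup (snd ad) 0 \<noteq> 0"
  proof
    fix Pm assume "Pm \<in> Sigma F Poly_Mapping.keys"
    then have "Poly_Mapping.lookup (fst Pm) (snd Pm) \<in> loc_ring {1..n}" using F_coeffs[of "fst Pm" "snd Pm"] by (cases Pm) simp
    then obtain A D where "Poly_Mapping.lookup (fst Pm) (snd Pm) = Fraction_Field.Fract A D"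
        "Poly_Mapping.lookup D 0 \<noteq> 0"
      unfolding loc_ring_def by blast
    then show "\<exists>ad. Poly_Mapping.lookup (fst Pm) (snd Pm) = Fraction_Field.Fract (fst ad) (snd ad)
      \<and> Poly_Mapping.lookup (snd ad) 0 \<noteq> 0"
      by (intro exI[of _ "(A, D)"]) simp
  qed
  define CAD where "CAD = (SOME f. \<forall>Pm\<in>Sigma F Poly_Mapping.keys. Poly_Mapping.lookup (fst Pm) (snd Pm) = Fraction_Field.Fract (fst (f Pm)) (snd (f Pm))
      \<and> Poly_Mapping.lookup (snd (f Pm)) 0 \<noteq> 0)"
  have CAD: "\<forall>Pm\<in>Sigma F Poly_Mapping.keys. Poly_Mapping.lookup (fst Pm) (snd Pm) = Fraction_Field.Fract (fst (CAD Pm)) (snd (CAD Pm))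
      \<and> Poly_Mapping.lookup (snd (CAD Pm)) 0 \<noteq> 0"
    unfolding CAD_def by (rule someI_ex[OF bchoice[OF ex2]])
  define ca where "ca P m = fst (CAD (P, m))" for P m
  define cd where "cd P m = snd (CAD (P, m))" for P m
  have coef: "Poly_Mapping.lookup P m = Fraction_Field.Fract (ca P m) (cd P m)"
    and cd0: "Poly_Mapping.lookup (cd P m) 0 \<noteq> 0" if "P \<in> F" "m \<in> Poly_Mapping.keys P" for P m
  proof -
    have Pm: "(P, m) \<in> Sigma F Poly_Mapping.keys" using that by blast
    have "Poly_Mapping.lookup P m = Fraction_Field.Fract (fst (CAD (P, m))) (snd (CAD (P, m)))
      \<and> Poly_Mapping.lookup (snd (CAD (P, m))) 0 \<noteq> 0" using bspec[OF CAD Pm] by simp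
    then show "Poly_Mapping.lookup P m = Fraction_Field.Fract (ca P m) (cd P m)"
      "Poly_Mapping.lookup (cd P m) 0 \<noteq> 0" unfolding ca_def cd_def by blast+
  qed
  have cdnz: "cd P m \<noteq> 0" if "P \<in> F" "m \<in> Poly_Mapping.keys P" for P m
    using cd0[OF that] by auto

  define mu where "mu j = (SOME s. s \<in> Poly_Mapping.keys (YA j) \<and> (\<forall>t\<in>Poly_Mapping.keys (YA j). mtdeg s \<le> mtdeg t))" for j
  have mu: "mu j \<in> Poly_Mapping.keys (YA j) \<and> (\<forall>t\<in>Poly_Mapping.keys (YA j). mtdeg (mu j) \<le> mtdeg t)" if nz: "YA j \<noteq> 0" for j
  proof -
    obtain s0 where s0: "s0 \<in> Poly_Mapping.keys (YA j)" using nz by (metis keys_eq_empty ex_in_conv)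
    have "\<exists>s. s \<in> Poly_Mapping.keys (YA j) \<and> (\<forall>t\<in>Poly_Mapping.keys (YA j). mtdeg s \<le> mtdeg t)"
      using ex_has_least_nat[of "\<lambda>s. s \<in> Poly_Mapping.keys (YA j)", OF s0, of mtdeg] by blast
    then show ?thesis unfolding mu_def by (rule someI_ex)
  qed

  define Mon where "Mon = (\<Union>j\<in>V. Poly_Mapping.keys (YA j) \<union> Poly_Mapping.keys (YD j))"
  define U where "U = V \<times> Mon \<times> {0..3::nat}"
  have finU: "finite U" unfolding U_def Mon_def using finV by simp
  obtain code :: "nat \<times> (nat \<Rightarrow>\<^sub>0 nat) \<times> nat \<Rightarrow> nat" where inj: "inj_on code U"
    using finite_imp_inj_to_nat_seg[OF finU] by blast
  have UA: "(j, s, 0) \<in> U" if "j \<in> V" "s \<in> Poly_Mapping.keys (YA j)" for j s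
    using that unfolding U_def Mon_def by auto
  have UD: "(j, s, 1) \<in> U" if "j \<in> V" "s \<in> Poly_Mapping.keys (YD j)" for j s
    using that unfolding U_def Mon_def by auto
  have U2: "(j, 0, 2) \<in> U" "(j, 0, 3) \<in> U" "(j, 0, 1) \<in> U" if "j \<in> V" for j
    using that YD0k[OF that] unfolding U_def Mon_def by auto

  define C :: "'a mpoly \<Rightarrow> 'a mpoly mpoly" where "C c = Poly_Mapping.map (\<lambda>x. Poly_Mapping.single 0 x) c" for c
  define TA :: "nat \<Rightarrow> 'a mpoly mpoly" where "TA j = tmpl (Poly_Mapping.keys (YA j)) (\<lambda>s. Var (code (j, s, 0)))" for j
  define TD :: "nat \<Rightarrow> 'a mpoly mpoly" where "TD j = tmpl (Poly_Mapping.keys (YD j)) (\<lambda>s. Var (code (j, s, 1)))" for j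
  define NP where "NP P = (\<Sum>m\<in>Poly_Mapping.keys P. mtdeg m)" for P :: "'a mpoly fract mpoly"
  define Eh where "Eh P = Eexpr (Poly_Mapping.keys P) (\<lambda>m. C (ca P m)) (\<lambda>m. C (cd P m)) V TA TD (NP P)" for P

  have NPle: "Poly_Mapping.lookup m j \<le> NP P" if "m \<in> Poly_Mapping.keys P" for m j P
  proof -
    have "mtdeg m \<le> NP P" unfolding NP_def using that by (intro member_le_sum) auto
    then show ?thesis using lookup_le_mtdeg[of m j] by linarith
  qed
  have varsV: "Poly_Mapping.keys m \<subseteq> V" if "P \<in> F" "m \<in> Poly_Mapping.keys P" for P m
    using mvars_sub[OF that(2)] F_vars[OF that(1)] unfolding V_def by blast

  define G1 where "G1 = (\<Union>P\<in>F. (\<lambda>\<mu>. Poly_Mapping.lookup (Eh P) \<mu>) ` Poly_Mapping.keys (Eh P))"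
  define G2 :: "'a mpoly set" where "G2 = (\<lambda>j. Var (code (j, 0, 1)) * Var (code (j, 0, 2)) - 1) ` V"
  define G3 :: "'a mpoly set" where "G3 = (\<lambda>j. Var (code (j, mu j, 0)) * Var (code (j, 0, 3)) - 1) ` {j\<in>V. YA j \<noteq> 0}"
  define G where "G = G1 \<union> G2 \<union> G3"
  have finG: "finite G" unfolding G_def G1_def G2_def G3_def using F_fin finV by auto

  define bval :: "nat \<times> (nat \<Rightarrow>\<^sub>0 nat) \<times> nat \<Rightarrow> 'b" where
    "bval u = (case u of (j, s, t) \<Rightarrow> if t = 0 then Poly_Mapping.lookup (YA j) s
        else if t = 1 then Poly_Mapping.lookup (YD j) s
        else if t = 2 then inverse (Poly_Mapping.lookup (YD j) 0)
        else inverse (Poly_Mapping.lookup (YA j) (mu j)))" for u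
  define b where "b v = bval (inv_into U code v)" for v
  have bcode: "b (code u) = bval u" if "u \<in> U" for u
    unfolding b_def using inv_into_f_f[OF inj that] by simp
  define hb where "hb q = mpeval (Poly_Mapping.map \<phi> q) b" for q
  have hb: "rhom hb"
    using rhom_comp[OF rhom_map[OF h] rhom_mpeval[of b]] unfolding hb_def by (simp add: o_def)
  have hb_Var: "hb (Var v) = b v" for v
    unfolding hb_def by (simp add: map_Var[OF h] mpeval_Var)
  have hb_C: "Poly_Mapping.map hb (C c) = Poly_Mapping.map \<phi> c" for c
  proof -
    have "Poly_Mapping.map hb (C c) = Poly_Mapping.map (\<lambda>x. hb (Poly_Mapping.single 0 x)) c"
      unfolding C_def by (rule map_map_hom) (simp_all add: rhom_zero[OF hb])
    also have "(\<lambda>x. hb (Poly_Mapping.single 0 x)) = \<phi>"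
      by (rule ext) (simp add: hb_def rhom_zero[OF h] mpeval_single)
    finally show ?thesis .
  qed
  have hb_TA: "Poly_Mapping.map hb (TA j) = YA j" if jV: "j \<in> V" for j
  proof -
    have "Poly_Mapping.map hb (TA j) = tmpl (Poly_Mapping.keys (YA j)) (\<lambda>s. b (code (j, s, 0)))"
      unfolding TA_def by (simp add: map_tmpl[OF hb] hb_Var)
    also have "\<dots> = tmpl (Poly_Mapping.keys (YA j)) (Poly_Mapping.lookup (YA j))"
    proof (rule tmpl_cong)
      fix s assume sk: "s \<in> Poly_Mapping.keys (YA j)"
      show "b (code (j, s, 0)) = Poly_Mapping.lookup (YA j) s"
        using bcode[OF UA[OF jV sk]] by (simp add: bval_def)
    qed
    finally show ?thesis by (simp add: tmpl_self)
  qed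
  have hb_TD: "Poly_Mapping.map hb (TD j) = YD j" if jV: "j \<in> V" for j
  proof -
    have "Poly_Mapping.map hb (TD j) = tmpl (Poly_Mapping.keys (YD j)) (\<lambda>s. b (code (j, s, 1)))"
      unfolding TD_def by (simp add: map_tmpl[OF hb] hb_Var)
    also have "\<dots> = tmpl (Poly_Mapping.keys (YD j)) (Poly_Mapping.lookup (YD j))"
    proof (rule tmpl_cong)
      fix s assume sk: "s \<in> Poly_Mapping.keys (YD j)"
      show "b (code (j, s, 1)) = Poly_Mapping.lookup (YD j) s"
        using bcode[OF UD[OF jV sk]] by (simp add: bval_def)
    qed
    finally show ?thesis by (simp add: tmpl_self)
  qed
  have hb_Eh: "Poly_Mapping.map hb (Eh P) = Eexpr (Poly_Mapping.keys P) (\<lambda>m. Poly_Mapping.map \<phi> (ca P m))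
      (\<lambda>m. Poly_Mapping.map \<phi> (cd P m)) V YA YD (NP P)" for P
    unfolding Eh_def rhom_Eexpr[OF rhom_map[OF hb]]
    by (rule Eexpr_cong) (simp_all add: hb_C hb_TA hb_TD)
  have EB0: "Eexpr (Poly_Mapping.keys P) (\<lambda>m. Poly_Mapping.map \<phi> (ca P m))
      (\<lambda>m. Poly_Mapping.map \<phi> (cd P m)) V YA YD (NP P) = 0" if P: "P \<in> F" for P
  proof -
    let ?P' = "Poly_Mapping.map (fract_map \<phi>) P"
    have "mpeval ?P' yhat * Fraction_Field.Fract ((\<Prod>m\<in>Poly_Mapping.keys P. Poly_Mapping.map \<phi> (cd P m)) * (\<Prod>j\<in>V. YD j ^ NP P)) 1
      = Fraction_Field.Fract (Eexpr (Poly_Mapping.keys P) (\<lambda>m. Poly_Mapping.map \<phi> (ca P m))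
      (\<lambda>m. Poly_Mapping.map \<phi> (cd P m)) V YA YD (NP P)) 1"
    proof (rule eval_clear[OF finite_keys _ finV])
      show "Poly_Mapping.keys ?P' \<subseteq> Poly_Mapping.keys P"
        by (auto simp: in_keys_iff lookup_map_hom fract_map_zero[OF h])
      fix m assume m: "m \<in> Poly_Mapping.keys P"
      show "Poly_Mapping.lookup ?P' m = Fraction_Field.Fract (Poly_Mapping.map \<phi> (ca P m)) (Poly_Mapping.map \<phi> (cd P m))"
        by (simp add: lookup_map_hom fract_map_zero[OF h] coef[OF P m] fract_map_Fract[OF h cdnz[OF P m]])
      show "Poly_Mapping.map \<phi> (cd P m) \<noteq> 0" by (rule map_nz[OF h cdnz[OF P m]])
      show "Poly_Mapping.keys m \<subseteq> V" by (rule varsV[OF P m])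
      show "Poly_Mapping.lookup m j \<le> NP P" for j by (rule NPle[OF m])
    next
      fix j assume j: "j \<in> V"
      show "yhat j = Fraction_Field.Fract (YA j) (YD j)" by (rule yhat_eq[OF j])
      show "YD j \<noteq> 0" by (rule YDnz[OF j])
    qed
    then have "Fraction_Field.Fract (Eexpr (Poly_Mapping.keys P) (\<lambda>m. Poly_Mapping.map \<phi> (ca P m))
      (\<lambda>m. Poly_Mapping.map \<phi> (cd P m)) V YA YD (NP P)) 1 = 0"
      using yhat_sol[OF P] by simp
    then show ?thesis by (simp add: emb_eq_0)
  qed
  have bsol: "\<forall>g\<in>G. mpeval (Poly_Mapping.map \<phi> g) b = 0"
  proof
    fix g assume "g \<in> G"
    then consider (g1) "g \<in> G1" | (g2) "g \<in> G2" | (g3) "g \<in> G3" unfolding G_def by blast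
    then show "mpeval (Poly_Mapping.map \<phi> g) b = 0"
    proof cases
      case g1
      then obtain P \<mu> where P: "P \<in> F" and g: "g = Poly_Mapping.lookup (Eh P) \<mu>" unfolding G1_def by blast
      have "mpeval (Poly_Mapping.map \<phi> g) b = Poly_Mapping.lookup (Poly_Mapping.map hb (Eh P)) \<mu>"
        unfolding g lookup_map_hom[of hb, OF rhom_zero[OF hb]] hb_def by (rule refl)
      also have "\<dots> = 0" by (simp add: hb_Eh EB0[OF P])
      finally show ?thesis .
    next
      case g2
      then obtain j where j: "j \<in> V" and g: "g = Var (code (j, 0, 1)) * Var (code (j, 0, 2)) - 1"
        unfolding G2_def by blast
      have "mpeval (Poly_Mapping.map \<phi> g) b = hb g" by (simp add: hb_def)
      also have "\<dots> = b (code (j, 0, 1)) * b (code (j, 0, 2)) - 1"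
        unfolding g by (simp add: rhom_diff[OF hb] rhom_mult[OF hb] rhom_one[OF hb] hb_Var)
      also have "\<dots> = 0" using YD0[OF j] bcode[OF U2(1)[OF j]] bcode[OF U2(3)[OF j]] by (simp add: bval_def)
      finally show ?thesis .
    next
      case g3
      then obtain j where j: "j \<in> V" "YA j \<noteq> 0" and g: "g = Var (code (j, mu j, 0)) * Var (code (j, 0, 3)) - 1"
        unfolding G3_def by blast
      have mj: "mu j \<in> Poly_Mapping.keys (YA j)" using mu[OF j(2)] by blast
      have "mpeval (Poly_Mapping.map \<phi> g) b = hb g" by (simp add: hb_def)
      also have "\<dots> = b (code (j, mu j, 0)) * b (code (j, 0, 3)) - 1"
        unfolding g by (simp add: rhom_diff[OF hb] rhom_mult[OF hb] rhom_one[OF hb] hb_Var)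
      also have "\<dots> = 0" using mj bcode[OF U2(2)[OF j(1)]] bcode[OF UA[OF j(1) mj]] by (simp add: bval_def in_keys_iff)
      finally show ?thesis .
    qed
  qed
  obtain a :: "nat \<Rightarrow> 'a" where asol: "\<forall>g\<in>G. mpeval g a = 0"
    using pure finG bsol unfolding alg_pure_def by blast

  define ha where "ha q = mpeval q a" for q
  have ha: "rhom ha" unfolding ha_def by (rule rhom_mpeval)
  have ha_Var: "ha (Var v) = a v" for v unfolding ha_def by (simp add: mpeval_Var)
  define A' where "A' j = tmpl (Poly_Mapping.keys (YA j)) (\<lambda>s. a (code (j, s, 0)))" for j
  define D' where "D' j = tmpl (Poly_Mapping.keys (YD j)) (\<lambda>s. a (code (j, s, 1)))" for j
  define y where "y j = (if j \<in> V then Fraction_Field.Fract (A' j) (D' j) else 0)" for j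
  have ha_C: "Poly_Mapping.map ha (C c) = c" for c
  proof -
    have "Poly_Mapping.map ha (C c) = Poly_Mapping.map (\<lambda>x. ha (Poly_Mapping.single 0 x)) c"
      unfolding C_def by (rule map_map_hom) (simp_all add: rhom_zero[OF ha])
    also have "(\<lambda>x. ha (Poly_Mapping.single 0 x)) = (\<lambda>x. x)"
      by (rule ext) (simp add: ha_def mpeval_single)
    finally show ?thesis by (simp add: map_ident)
  qed
  have ha_Eh: "Poly_Mapping.map ha (Eh P) = Eexpr (Poly_Mapping.keys P) (ca P) (cd P) V A' D' (NP P)" for P
    unfolding Eh_def rhom_Eexpr[OF rhom_map[OF ha]]
    by (rule Eexpr_cong) (simp_all add: ha_C TA_def TD_def A'_def D'_def map_tmpl[OF ha] ha_Var)
  have EA0: "Eexpr (Poly_Mapping.keys P) (ca P) (cd P) V A' D' (NP P) = 0" if P: "P \<in> F" for P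
  proof -
    have "Poly_Mapping.map ha (Eh P) = 0"
    proof (rule poly_mapping_eqI)
      fix \<mu>
      show "Poly_Mapping.lookup (Poly_Mapping.map ha (Eh P)) \<mu> = Poly_Mapping.lookup 0 \<mu>"
      proof (cases "\<mu> \<in> Poly_Mapping.keys (Eh P)")
        case True
        then have "Poly_Mapping.lookup (Eh P) \<mu> \<in> G" unfolding G_def G1_def using P by blast
        then show ?thesis using asol by (simp add: lookup_map_hom rhom_zero[OF ha] ha_def)
      next
        case False
        then show ?thesis by (simp add: lookup_map_hom rhom_zero[OF ha] in_keys_iff)
      qed
    qed
    then show ?thesis by (simp add: ha_Eh)
  qed
  have D'0: "Poly_Mapping.lookup (D' j) 0 \<noteq> 0" if j: "j \<in> V" for j
  proof -
    have "Var (code (j, 0, 1)) * Var (code (j, 0, 2)) - 1 \<in> G" unfolding G_def G2_def using j by blast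
    then have "ha (Var (code (j, 0, 1)) * Var (code (j, 0, 2)) - 1) = 0" using asol by (simp add: ha_def)
    then have "a (code (j, 0, 1)) * a (code (j, 0, 2)) = 1"
      by (simp add: rhom_diff[OF ha] rhom_mult[OF ha] rhom_one[OF ha] ha_Var)
    then have "a (code (j, 0, 1)) \<noteq> 0" by auto
    then show ?thesis unfolding D'_def by (simp add: lookup_tmpl YD0k[OF j])
  qed
  have D'nz: "D' j \<noteq> 0" if "j \<in> V" for j using D'0[OF that] by auto
  have keysA': "Poly_Mapping.keys (A' j) \<subseteq> Poly_Mapping.keys (YA j)" for j
    unfolding A'_def by (rule keys_tmpl[OF finite_keys])
  have keysD': "Poly_Mapping.keys (D' j) \<subseteq> Poly_Mapping.keys (YD j)" for j
    unfolding D'_def by (rule keys_tmpl[OF finite_keys])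

  have ysol: "mpeval P y = 0" if P: "P \<in> F" for P
  proof -
    have "mpeval P y * Fraction_Field.Fract ((\<Prod>m\<in>Poly_Mapping.keys P. cd P m) * (\<Prod>j\<in>V. D' j ^ NP P)) 1
      = Fraction_Field.Fract (Eexpr (Poly_Mapping.keys P) (ca P) (cd P) V A' D' (NP P)) 1"
    proof (rule eval_clear[OF finite_keys subset_refl finV])
      fix m assume m: "m \<in> Poly_Mapping.keys P"
      show "Poly_Mapping.lookup P m = Fraction_Field.Fract (ca P m) (cd P m)" by (rule coef[OF P m])
      show "cd P m \<noteq> 0" by (rule cdnz[OF P m])
      show "Poly_Mapping.keys m \<subseteq> V" by (rule varsV[OF P m])
      show "Poly_Mapping.lookup m j \<le> NP P" for j by (rule NPle[OF m])
    next
      fix j assume j: "j \<in> V"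
      show "y j = Fraction_Field.Fract (A' j) (D' j)" using j by (simp add: y_def)
      show "D' j \<noteq> 0" by (rule D'nz[OF j])
    qed
    moreover have "(\<Prod>m\<in>Poly_Mapping.keys P. cd P m) * (\<Prod>j\<in>V. D' j ^ NP P) \<noteq> 0"
      using cdnz[OF P] D'nz finV by simp
    ultimately show ?thesis by (simp add: EA0[OF P] fract_collapse emb_eq_0)
  qed

  have yj: "y j \<in> loc_ring (J j) \<and> loc_ord (J j) (y j) = loc_ord (J j) (yhat j)" if j: "j \<in> V" for j
  proof
    have mA': "mvars (A' j) \<subseteq> J j" using mvars_mono[OF keysA'] YA_vars[OF j] by blast
    have mD': "mvars (D' j) \<subseteq> J j" using mvars_mono[OF keysD'] YD_vars[OF j] by blast
    show "y j \<in> loc_ring (J j)"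
      unfolding loc_ring_def y_def using j mA' mD' D'0[OF j] by auto
    show "loc_ord (J j) (y j) = loc_ord (J j) (yhat j)"
    proof (cases "YA j = 0")
      case True
      then have "A' j = 0" using keysA'[of j] by (metis keys_eq_empty subset_empty)
      then have "y j = 0" using j by (simp add: y_def fract_collapse)
      moreover have "yhat j = 0" using True yhat_eq[OF j] by (simp add: fract_collapse)
      ultimately show ?thesis by (simp add: loc_ord_zero)
    next
      case False
      note muj = mu[OF False]
      have "a (code (j, mu j, 0)) \<noteq> 0"
      proof -
        have "Var (code (j, mu j, 0)) * Var (code (j, 0, 3)) - 1 \<in> G"
          unfolding G_def G3_def using j False by blast
        then have "ha (Var (code (j, mu j, 0)) * Var (code (j, 0, 3)) - 1) = 0" using asol by (simp add: ha_def)
        then have "a (code (j, mu j, 0)) * a (code (j, 0, 3)) = 1"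
          by (simp add: rhom_diff[OF ha] rhom_mult[OF ha] rhom_one[OF ha] ha_Var)
        then show ?thesis by auto
      qed
      then have mA: "mu j \<in> Poly_Mapping.keys (A' j)"
        using muj unfolding A'_def by (simp add: in_keys_iff lookup_tmpl)
      have "loc_ord (J j) (y j) = enat (mtdeg (mu j))"
        unfolding y_def using j
        by (simp add: loc_ord_eq[OF mA' mD' D'0[OF j] mA] muj subsetD[OF keysA'])
      moreover have "loc_ord (J j) (yhat j) = enat (mtdeg (mu j))"
        unfolding yhat_eq[OF j] using loc_ord_eq[OF YA_vars[OF j] YD_vars[OF j] YD0[OF j]] muj by blast
      ultimately show ?thesis by simp
    qed
  qed
  show ?thesis
    by (rule exI[of _ y]) (use yj ysol in \<open>auto simp: V_def\<close>)
qed



end
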